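(* (i) If $X$ is a real Banach space with a shrinking 1-unconditional finite-dimensional decomposition, then $X$ has property (au$^*$). (ii) If $Y$ is a separable real Banach space with property (au$^*$), then every closed subspace $X$ of $Y$ and every quotient $Y/Z$ of $Y$ by a closed subspace $Z$ has property (au$^*$).
   Context: All Banach spaces are real. A separable Banach space $X$ has property (au$^*$) if $\lim_{n\to\infty}(\|x^*+x_n^*\|-\|x^*-x_n^*\|)=0$ whenever $x^*\in X^*$ and $(x_n^* )_{n\ge1}$ is a weak$^*$-null sequence in $X^*$. A finite-dimensional decomposition (FDD) of $Y$ is a sequence of finite-rank projections $(Q_j)_{j\ge1}$ with $Q_iQ_j=0$ for $i\ne j$ and $y=\sum_j Q_jy$ for all $y\in Y$; it is a 1-unconditional FDD (1-UFDD) if $\|\sum_{j=1}^n\epsilon_jQ_jy\|\le\|y\|$ for all $y$, all $n$ and all signs $\epsilon_j=\pm1$ (so the series converge unconditionally); it is shrinking if $x^*=\sum_j Q_j^*x^*$ in norm for every $x^*\in Y^*$. *)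

theory Defs
  imports "HOL-Analysis.Analysis"
begin

definition weak_star_null :: "(nat \<Rightarrow> ('a::real_normed_vector \<Rightarrow>\<^sub>L real)) \<Rightarrow> bool" where
  "weak_star_null f \<longleftrightarrow> (\<forall>x. (\<lambda>n. blinfun_apply (f n) x) \<longlonglongrightarrow> 0)"

definition au_star :: "'a::real_normed_vector itself \<Rightarrow> bool" where
  "au_star (_::'a itself) \<longleftrightarrow>
     separable_space (euclidean :: 'a topology) \<and>
     (\<forall>(xs::'a \<Rightarrow>\<^sub>L real) (xn::nat \<Rightarrow> ('a \<Rightarrow>\<^sub>L real)).
        weak_star_null xn \<longrightarrow>
        (\<lambda>n. norm (xs + xn n) - norm (xs - xn n)) \<longlonglongrightarrow> 0)"

text \<open>Finite-dimensional decomposition (indexed from 0).\<close>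

definition is_FDD :: "(nat \<Rightarrow> ('a::real_normed_vector \<Rightarrow>\<^sub>L 'a)) \<Rightarrow> bool" where
  "is_FDD Q \<longleftrightarrow>
     (\<forall>j. Q j o\<^sub>L Q j = Q j) \<and>
     (\<forall>j. \<exists>B. finite B \<and> range (blinfun_apply (Q j)) \<subseteq> span B) \<and>
     (\<forall>i j. i \<noteq> j \<longrightarrow> Q i o\<^sub>L Q j = 0) \<and>
     (\<forall>y. (\<lambda>j. Q j y) sums y)"

definition is_1UFDD :: "(nat \<Rightarrow> ('a::real_normed_vector \<Rightarrow>\<^sub>L 'a)) \<Rightarrow> bool" where
  "is_1UFDD Q \<longleftrightarrow> is_FDD Q \<and>
     (\<forall>y n (\<epsilon>::nat \<Rightarrow> real). (\<forall>j. \<epsilon> j = 1 \<or> \<epsilon> j = -1) \<longrightarrow>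
        norm (\<Sum>j<n. \<epsilon> j *\<^sub>R Q j y) \<le> norm y)"

text \<open>Shrinking: \<open>x* = \<Sum> Q_j* x*\<close> in norm, where \<open>Q_j* x* = x* \<circ> Q_j\<close>.\<close>

definition is_shrinking :: "(nat \<Rightarrow> ('a::real_normed_vector \<Rightarrow>\<^sub>L 'a)) \<Rightarrow> bool" where
  "is_shrinking Q \<longleftrightarrow> (\<forall>xs::'a \<Rightarrow>\<^sub>L real. (\<lambda>j. xs o\<^sub>L Q j) sums xs)"

end

theory Submission
  imports Defs "HOL-Library.Diagonal_Subsequence"
begin


section \<open>Hahn-Banach\<close>

definition lin_graph :: "real \<Rightarrow> ('a::real_normed_vector \<times> real) set \<Rightarrow> bool" where
 "lin_graph c G \<longleftrightarrow> (\<forall>x a b. (x,a)\<in>G \<longrightarrow> (x,b)\<in>G \<longrightarrow> a = b) \<and>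
   (\<forall>x a y b. (x,a)\<in>G \<longrightarrow> (y,b)\<in>G \<longrightarrow> (x+y, a+b) \<in> G) \<and>
   (\<forall>x a r. (x,a)\<in>G \<longrightarrow> (r *\<^sub>R x, r*a) \<in> G) \<and>
   (\<forall>x a. (x,a)\<in>G \<longrightarrow> a \<le> c * norm x)"

lemma lin_graph_step:
  fixes G :: "('a::real_normed_vector \<times> real) set"
  assumes lg: "lin_graph c G" and ne: "G \<noteq> {}" and c: "c \<ge> 0"
    and x0: "\<forall>a. (x0,a) \<notin> G"
  shows "\<exists>G'. lin_graph c G' \<and> G \<subseteq> G' \<and> G' \<noteq> G"
proof -
  have fnc: "\<And>x a b. (x,a)\<in>G \<Longrightarrow> (x,b)\<in>G \<Longrightarrow> a = b"
   and add: "\<And>x a y b. (x,a)\<in>G \<Longrightarrow> (y,b)\<in>G \<Longrightarrow> (x+y, a+b) \<in> G"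
   and scl: "\<And>x a r. (x,a)\<in>G \<Longrightarrow> (r *\<^sub>R x, r*a) \<in> G"
   and dom: "\<And>x a. (x,a)\<in>G \<Longrightarrow> a \<le> c * norm x"
    using lg unfolding lin_graph_def by blast+
  define D where "D = {x. \<exists>a. (x,a)\<in>G}"
  define h where "h x = (SOME a. (x,a)\<in>G)" for x
  have hD: "x \<in> D \<Longrightarrow> (x, h x) \<in> G" for x
    unfolding D_def h_def by (auto intro: someI)
  have hG: "(x,a) \<in> G \<Longrightarrow> h x = a" for x a
    using hD fnc D_def by blast
  have DG: "(x,a) \<in> G \<Longrightarrow> x \<in> D" for x a using D_def by blast
  obtain x1 a1 where "(x1,a1) \<in> G" using ne by auto
  from scl[OF this, of 0] have z: "(0,0) \<in> G" by simp
  have D0: "0 \<in> D" using z DG by blast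
  have h0: "h 0 = 0" using hG z by blast
  have Dadd: "x \<in> D \<Longrightarrow> y \<in> D \<Longrightarrow> x + y \<in> D" for x y using add hD DG by blast
  have Dscl: "x \<in> D \<Longrightarrow> r *\<^sub>R x \<in> D" for x r using scl hD DG by blast
  have hadd: "x \<in> D \<Longrightarrow> y \<in> D \<Longrightarrow> h (x + y) = h x + h y" for x y
    using add hD hG by blast
  have hscl: "x \<in> D \<Longrightarrow> h (r *\<^sub>R x) = r * h x" for x r
    using scl hD hG by blast
  have hdom: "x \<in> D \<Longrightarrow> h x \<le> c * norm x" for x using dom hD by blast
  have key: "h y - c * norm (y - x0) \<le> c * norm (z + x0) - h z" if "y \<in> D" "z \<in> D" for y z
  proof -
    have "h y + h z = h (y + z)" using hadd that by simp
    also have "\<dots> \<le> c * norm (y + z)" using hdom Dadd that by blast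
    also have "norm (y + z) \<le> norm (y - x0) + norm (z + x0)"
      using norm_triangle_ineq[of "y - x0" "z + x0"] by simp
    then have "c * norm (y + z) \<le> c * norm (y - x0) + c * norm (z + x0)"
      using c by (metis distrib_left mult_left_mono)
    finally show ?thesis by linarith
  qed
  define S where "S = (\<lambda>y. h y - c * norm (y - x0)) ` D"
  define \<xi> where "\<xi> = Sup S"
  have Sne: "S \<noteq> {}" using D0 S_def by auto
  have Sbdd: "bdd_above S" unfolding S_def bdd_above_def using key D0 by blast
  have xi1: "h y - c * norm (y - x0) \<le> \<xi>" if "y \<in> D" for y
    unfolding \<xi>_def using Sbdd that S_def by (auto intro: cSup_upper)
  have xi2: "\<xi> \<le> c * norm (z + x0) - h z" if "z \<in> D" for z
    unfolding \<xi>_def using Sne key that S_def by (auto intro!: cSup_least)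
  have x0D: "x0 \<notin> D" using x0 D_def by blast
  define G' where "G' = {(x + t *\<^sub>R x0, h x + t * \<xi>) | x t. x \<in> D}"
  have uniq: "x = x' \<and> t = t'" if "x \<in> D" "x' \<in> D" "x + t *\<^sub>R x0 = x' + t' *\<^sub>R x0" for x x' t t'
  proof (cases "t = t'")
    case True then show ?thesis using that by simp
  next
    case False
    have "(t - t') *\<^sub>R x0 = x' - x" using that(3) by (simp add: algebra_simps)
    then have e: "(t - t') *\<^sub>R x0 = x' + (-1) *\<^sub>R x" by simp
    have "x0 = (1 / (t - t')) *\<^sub>R ((t - t') *\<^sub>R x0)" using False by simp
    then have "x0 = (1 / (t - t')) *\<^sub>R (x' + (-1) *\<^sub>R x)" using e by simp
    then have "x0 \<in> D" using that Dadd Dscl by metis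
    then show ?thesis using x0D by blast
  qed
  have "lin_graph c G'"
    unfolding lin_graph_def
  proof (intro conjI allI impI)
    fix x a b assume "(x,a) \<in> G'" "(x,b) \<in> G'"
    then show "a = b" unfolding G'_def using uniq by auto
  next
    fix x a y b assume "(x,a) \<in> G'" "(y,b) \<in> G'"
    then obtain u t v s where "x = u + t *\<^sub>R x0" "a = h u + t * \<xi>" "u \<in> D"
      "y = v + s *\<^sub>R x0" "b = h v + s * \<xi>" "v \<in> D"
      unfolding G'_def by auto
    then show "(x + y, a + b) \<in> G'" unfolding G'_def
      by (intro CollectI exI[of _ "u+v"] exI[of _ "t+s"]) (auto simp: hadd Dadd algebra_simps)
  next
    fix x a r assume "(x,a) \<in> G'"
    then obtain u t where "x = u + t *\<^sub>R x0" "a = h u + t * \<xi>" "u \<in> D"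
      unfolding G'_def by auto
    then show "(r *\<^sub>R x, r * a) \<in> G'" unfolding G'_def
      by (intro CollectI exI[of _ "r *\<^sub>R u"] exI[of _ "r * t"]) (auto simp: hscl Dscl algebra_simps)
  next
    fix x a assume "(x,a) \<in> G'"
    then obtain u t where xe: "x = u + t *\<^sub>R x0" and ae: "a = h u + t * \<xi>" and u: "u \<in> D"
      unfolding G'_def by auto
    consider "t = 0" | "t > 0" | "t < 0" by linarith
    then show "a \<le> c * norm x"
    proof cases
      case 1 then show ?thesis using xe ae hdom u by simp
    next
      case 2
      have uD: "(1/t) *\<^sub>R u \<in> D" using Dscl u by blast
      have "\<xi> \<le> c * norm ((1/t) *\<^sub>R u + x0) - h ((1/t) *\<^sub>R u)" using xi2[OF uD] .
      also have "(1/t) *\<^sub>R u + x0 = (1/t) *\<^sub>R x" using xe 2 by (simp add: algebra_simps)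
      also have "h ((1/t) *\<^sub>R u) = h u / t" using hscl u by simp
      finally have "\<xi> \<le> c * (norm x / t) - h u / t" using 2 by simp
      then have "t * \<xi> \<le> t * (c * (norm x / t) - h u / t)" using 2 by (simp add: mult_left_mono)
      moreover have "t * (c * (norm x / t) - h u / t) = c * norm x - h u" using 2 by (simp add: field_simps)
      ultimately show ?thesis using ae by (simp add: algebra_simps)
    next
      case 3
      define s where "s = - t"
      have s: "s > 0" using 3 s_def by simp
      have uD: "(1/s) *\<^sub>R u \<in> D" using Dscl u by blast
      have "h ((1/s) *\<^sub>R u) - c * norm ((1/s) *\<^sub>R u - x0) \<le> \<xi>" using xi1[OF uD] .
      also have "(1/s) *\<^sub>R u - x0 = (1/s) *\<^sub>R x" using xe s s_def by (simp add: algebra_simps)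
      also have "h ((1/s) *\<^sub>R u) = h u / s" using hscl u by simp
      finally have "h u / s - c * (norm x / s) \<le> \<xi>" using s by simp
      then have "s * (h u / s - c * (norm x / s)) \<le> s * \<xi>" using s by (simp add: mult_left_mono)
      moreover have "s * (h u / s - c * (norm x / s)) = h u - c * norm x" using s by (simp add: field_simps)
      ultimately show ?thesis using ae s_def by (simp add: algebra_simps)
    qed
  qed
  moreover have "G \<subseteq> G'"
  proof
    fix p assume "p \<in> G"
    then obtain x a where p: "p = (x,a)" "(x,a) \<in> G" by (cases p) auto
    then show "p \<in> G'" unfolding G'_def using hG DG
      by (intro CollectI exI[of _ x] exI[of _ 0]) auto
  qed
  moreover have "(x0, \<xi>) \<in> G'" unfolding G'_def
    by (intro CollectI exI[of _ 0] exI[of _ 1]) (auto simp: D0 h0)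
  then have "G' \<noteq> G" using x0 by blast
  ultimately show ?thesis by blast
qed

lemma lg_fun: "lin_graph c G \<Longrightarrow> (x,a)\<in>G \<Longrightarrow> (x,b)\<in>G \<Longrightarrow> a = b"
  unfolding lin_graph_def by blast
lemma lg_add: "lin_graph c G \<Longrightarrow> (x,a)\<in>G \<Longrightarrow> (y,b)\<in>G \<Longrightarrow> (x+y, a+b) \<in> G"
  unfolding lin_graph_def by blast
lemma lg_scl: "lin_graph c G \<Longrightarrow> (x,a)\<in>G \<Longrightarrow> (r *\<^sub>R x, r*a) \<in> G"
  unfolding lin_graph_def by blast
lemma lg_dom: "lin_graph c G \<Longrightarrow> (x,a)\<in>G \<Longrightarrow> a \<le> c * norm x"
  unfolding lin_graph_def by blast

lemma lin_graph_Union: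
  assumes "C \<noteq> {}" "\<forall>G\<in>C. lin_graph c G" "\<forall>A\<in>C. \<forall>B\<in>C. A \<subseteq> B \<or> B \<subseteq> A"
  shows "lin_graph c (\<Union>C)"
proof -
  have two: "\<exists>G\<in>C. p \<in> G \<and> q \<in> G" if "p \<in> \<Union>C" "q \<in> \<Union>C" for p q
    using that assms(3) by blast
  show ?thesis unfolding lin_graph_def
  proof (intro conjI allI impI)
    fix x a b assume "(x,a) \<in> \<Union>C" "(x,b) \<in> \<Union>C"
    then obtain G where "G \<in> C" "(x,a) \<in> G" "(x,b) \<in> G" using two by blast
    then show "a = b" using assms(2) lg_fun by metis
  next
    fix x a y b assume "(x,a) \<in> \<Union>C" "(y,b) \<in> \<Union>C"
    then obtain G where "G \<in> C" "(x,a) \<in> G" "(y,b) \<in> G" using two by blast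
    then have "(x+y, a+b) \<in> G" using assms(2) lg_add by metis
    then show "(x+y, a+b) \<in> \<Union>C" using \<open>G \<in> C\<close> by blast
  next
    fix x a r assume "(x,a) \<in> \<Union>C"
    then obtain G where "G \<in> C" "(x,a) \<in> G" by blast
    then have "(r *\<^sub>R x, r*a) \<in> G" using assms(2) lg_scl by metis
    then show "(r *\<^sub>R x, r*a) \<in> \<Union>C" using \<open>G \<in> C\<close> by blast
  next
    fix x a assume "(x,a) \<in> \<Union>C"
    then obtain G where "G \<in> C" "(x,a) \<in> G" by blast
    then show "a \<le> c * norm x" using assms(2) lg_dom by metis
  qed
qed

lemma HB_graph:
  fixes G0 :: "('a::real_normed_vector \<times> real) set"
  assumes lg: "lin_graph c G0" and ne: "G0 \<noteq> {}" and c: "c \<ge> 0"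
  shows "\<exists>h. linear h \<and> (\<forall>x a. (x,a)\<in>G0 \<longrightarrow> h x = a) \<and> (\<forall>x. h x \<le> c * norm x)"
proof -
  define A where "A = {G. lin_graph c G \<and> G0 \<subseteq> G}"
  have "\<forall>C\<in>chains A. \<exists>U\<in>A. \<forall>X\<in>C. X \<subseteq> U"
  proof
    fix C assume C: "C \<in> chains A"
    show "\<exists>U\<in>A. \<forall>X\<in>C. X \<subseteq> U"
    proof (cases "C = {}")
      case True then show ?thesis using lg A_def by auto
    next
      case False
      have "C \<subseteq> A" "\<forall>A\<in>C. \<forall>B\<in>C. A \<subseteq> B \<or> B \<subseteq> A"
        using C unfolding chains_def chain_subset_def by auto
      then have "lin_graph c (\<Union>C)" "G0 \<subseteq> \<Union>C"
        using lin_graph_Union[OF False] False A_def by blast+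
      then show ?thesis using A_def by (intro bexI[of _ "\<Union>C"]) auto
    qed
  qed
  from Zorn_Lemma2[OF this] obtain M where M: "M \<in> A" and max: "\<forall>X\<in>A. M \<subseteq> X \<longrightarrow> X = M"
    by blast
  have lgM: "lin_graph c M" and G0M: "G0 \<subseteq> M" using M A_def by auto
  have neM: "M \<noteq> {}" using G0M ne by blast
  have all: "\<exists>a. (x,a) \<in> M" for x
  proof (rule ccontr)
    assume "\<not> ?thesis"
    then obtain G' where "lin_graph c G'" "M \<subseteq> G'" "G' \<noteq> M"
      using lin_graph_step[OF lgM neM c] by blast
    moreover have "G' \<in> A" using \<open>lin_graph c G'\<close> \<open>M \<subseteq> G'\<close> G0M A_def by blast
    ultimately show False using max by blast
  qed
  have fnc: "\<And>x a b. (x,a)\<in>M \<Longrightarrow> (x,b)\<in>M \<Longrightarrow> a = b"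
   and add: "\<And>x a y b. (x,a)\<in>M \<Longrightarrow> (y,b)\<in>M \<Longrightarrow> (x+y, a+b) \<in> M"
   and scl: "\<And>x a r. (x,a)\<in>M \<Longrightarrow> (r *\<^sub>R x, r*a) \<in> M"
   and dom: "\<And>x a. (x,a)\<in>M \<Longrightarrow> a \<le> c * norm x"
    using lgM lg_fun lg_add lg_scl lg_dom by metis+
  define h where "h x = (SOME a. (x,a)\<in>M)" for x
  have hM: "(x, h x) \<in> M" for x unfolding h_def using all by (auto intro: someI_ex)
  have hG: "(x,a) \<in> M \<Longrightarrow> h x = a" for x a using hM fnc by blast
  have "linear h"
  proof (rule linearI)
    fix x y show "h (x + y) = h x + h y" using add[OF hM hM] hG by blast
  next
    fix r x show "h (r *\<^sub>R x) = r *\<^sub>R h x" using scl[OF hM] hG by simp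
  qed
  moreover have "\<forall>x a. (x,a)\<in>G0 \<longrightarrow> h x = a" using hG G0M by blast
  moreover have "\<forall>x. h x \<le> c * norm x" using dom hM by blast
  ultimately show ?thesis by blast
qed

lemma HB_isometry:
  fixes T :: "'s::real_normed_vector \<Rightarrow>\<^sub>L 'y::real_normed_vector" and f :: "'s \<Rightarrow>\<^sub>L real"
  assumes iso: "\<forall>x. norm (T x) = norm x"
  shows "\<exists>F::'y \<Rightarrow>\<^sub>L real. F o\<^sub>L T = f \<and> norm F \<le> norm f"
proof -
  define G0 where "G0 = (\<lambda>s. (T s, f s)) ` UNIV"
  have inj: "T s = T s' \<Longrightarrow> s = s'" for s s'
  proof -
    assume "T s = T s'"
    then have "norm (T (s - s')) = 0" by (simp add: blinfun.diff_right)
    then show "s = s'" using iso by simp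
  qed
  have "lin_graph (norm f) G0" unfolding lin_graph_def G0_def
  proof (intro conjI allI impI)
    fix x a b assume "(x,a) \<in> range (\<lambda>s. (T s, f s))" "(x,b) \<in> range (\<lambda>s. (T s, f s))"
    then show "a = b" using inj by auto
  next
    fix x a y b assume "(x,a) \<in> range (\<lambda>s. (T s, f s))" "(y,b) \<in> range (\<lambda>s. (T s, f s))"
    then obtain s s' where "x = T s" "a = f s" "y = T s'" "b = f s'" by auto
    then show "(x+y, a+b) \<in> range (\<lambda>s. (T s, f s))"
      by (auto simp: blinfun.add_right intro!: image_eqI[of _ _ "s+s'"])
  next
    fix x a r assume "(x,a) \<in> range (\<lambda>s. (T s, f s))"
    then obtain s where "x = T s" "a = f s" by auto
    then show "(r *\<^sub>R x, r*a) \<in> range (\<lambda>s. (T s, f s))"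
      by (auto simp: blinfun.scaleR_right intro!: image_eqI[of _ _ "r *\<^sub>R s"])
  next
    fix x a assume "(x,a) \<in> range (\<lambda>s. (T s, f s))"
    then obtain s where "x = T s" "a = f s" by auto
    moreover have "f s \<le> norm f * norm s" using norm_blinfun[of f s] by simp
    ultimately show "a \<le> norm f * norm x" using iso by simp
  qed
  from HB_graph[OF this] obtain h where h: "linear h" "\<forall>x a. (x,a)\<in>G0 \<longrightarrow> h x = a"
      "\<forall>x. h x \<le> norm f * norm x"
    unfolding G0_def by auto
  have habs: "\<bar>h x\<bar> \<le> norm f * norm x" for x
  proof -
    have "h (- x) = - h x" using h(1) by (simp add: linear_neg)
    then show ?thesis using h(3) spec[OF h(3), of "-x"] by (simp add: abs_le_iff)
  qed
  have bl: "bounded_linear h"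
    using h(1) habs by (intro bounded_linear_intro[where K="norm f"]) (auto simp: linear_add linear_scale mult.commute)
  define F where "F = Blinfun h"
  have Fh: "blinfun_apply F = h" using bl F_def bounded_linear_Blinfun_apply by blast
  have "F o\<^sub>L T = f" using h(2) G0_def by (intro blinfun_eqI) (auto simp: Fh)
  moreover have "norm F \<le> norm f" using habs by (intro norm_blinfun_bound) (auto simp: Fh)
  ultimately show ?thesis by blast
qed



section \<open>Uniform boundedness\<close>

lemma UBP:
  fixes f :: "nat \<Rightarrow> ('a::banach \<Rightarrow>\<^sub>L real)"
  assumes bd: "\<And>x. \<exists>B. \<forall>n. \<bar>f n x\<bar> \<le> B"
  shows "\<exists>M. \<forall>n. norm (f n) \<le> M"
proof -
  define F where "F k = (\<Inter>n. {x. \<bar>f n x\<bar> \<le> real k})" for k :: nat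
  have clo: "closed (F k)" for k
    unfolding F_def by (intro closed_INT ballI closed_Collect_le continuous_intros)
  have mem: "\<exists>k. x \<in> F k" for x
  proof -
    obtain B where B: "\<forall>n. \<bar>f n x\<bar> \<le> B" using bd by blast
    have "\<bar>f n x\<bar> \<le> real (nat \<lceil>B\<rceil>)" for n
      using B[rule_format, of n] real_nat_ceiling_ge[of B] by linarith
    then have "x \<in> F (nat \<lceil>B\<rceil>)" unfolding F_def by auto
    then show ?thesis by blast
  qed
  have cov: "\<Union>(range F) = UNIV" using mem by blast
  have "\<exists>k. interior (F k) \<noteq> {}"
  proof (rule ccontr)
    assume "\<not> ?thesis"
    then have "euclidean interior_of \<Union>(range F) = {}"
      by (intro Baire_category_alt) (auto simp: completely_metrizable_space_euclidean clo)
    then show False using cov by simp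
  qed
  then obtain k x0 where "x0 \<in> interior (F k)" by blast
  then obtain r where r: "r > 0" "ball x0 r \<subseteq> F k" using mem_interior by blast
  have x0F: "x0 \<in> F k" using r by auto
  have bnd: "\<bar>f n y\<bar> \<le> (4 * real k / r) * norm y" for n y
  proof (cases "y = 0")
    case True then show ?thesis by simp
  next
    case False
    define z where "z = (r / (2 * norm y)) *\<^sub>R y"
    have nz: "norm z = r / 2" using False r unfolding z_def by simp
    have "x0 + z \<in> ball x0 r" using nz r by (simp add: dist_norm)
    then have "x0 + z \<in> F k" using r by blast
    then have "\<bar>f n (x0 + z)\<bar> \<le> real k" "\<bar>f n x0\<bar> \<le> real k" using x0F unfolding F_def by auto
    then have "\<bar>f n z\<bar> \<le> 2 * real k" by (simp add: blinfun.add_right)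
    moreover have "f n z = (r / (2 * norm y)) * f n y" unfolding z_def by (simp add: blinfun.scaleR_right)
    ultimately have "(r / (2 * norm y)) * \<bar>f n y\<bar> \<le> 2 * real k" using r by (simp add: abs_mult)
    then have "r * \<bar>f n y\<bar> \<le> 4 * real k * norm y" using False r by (simp add: field_simps)
    then show ?thesis using r by (simp add: field_simps)
  qed
  have "norm (f n) \<le> 4 * real k / r" for n
    using bnd r by (intro norm_blinfun_bound) auto
  then show ?thesis by blast
qed



section \<open>Sequential Banach-Alaoglu\<close>

lemma alaoglu_seq:
  fixes g :: "nat \<Rightarrow> ('a::real_normed_vector \<Rightarrow>\<^sub>L real)" and C :: "'a set"
  assumes C: "countable C" "closure C = UNIV" and bd: "\<And>n. norm (g n) \<le> M"
  shows "\<exists>r (L::'a \<Rightarrow>\<^sub>L real). strict_mono r \<and> (\<forall>x. (\<lambda>n. g (r n) x) \<longlonglongrightarrow> L x)"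
proof -
  have M0: "M \<ge> 0" using bd[of 0] norm_ge_zero[of "g 0"] by linarith
  have gb: "\<bar>g n x\<bar> \<le> M * norm x" for n x
    using order_trans[OF norm_blinfun[of "g n" x] mult_right_mono[OF bd[of n] norm_ge_zero[of x]]] by simp
  have Cne: "C \<noteq> {}" using C(2) by (metis closure_empty UNIV_not_empty)
  define d where "d = from_nat_into C"
  have dC: "range d = C" unfolding d_def using range_from_nat_into[OF Cne C(1)] .
  interpret sub: subseqs "\<lambda>k (s::nat\<Rightarrow>nat). convergent (\<lambda>i. blinfun_apply (g (s i)) (d k))"
  proof
    fix k and s :: "nat \<Rightarrow> nat" assume "strict_mono s"
    have "bounded (range (\<lambda>i. g (s i) (d k)))"
      unfolding bounded_iff using gb by (auto simp: real_norm_def)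
    then obtain l r' where "strict_mono r'" "((\<lambda>i. g (s i) (d k)) \<circ> r') \<longlonglongrightarrow> l"
      using bounded_imp_convergent_subsequence by blast
    then show "\<exists>r'. strict_mono r' \<and> convergent (\<lambda>i. g ((s \<circ> r') i) (d k))"
      by (auto simp: convergent_def o_def)
  qed
  define r where "r = sub.diagseq"
  have rmono: "strict_mono r" unfolding r_def by (rule sub.subseq_diagseq)
  have convd: "convergent (\<lambda>i. g (r i) (d k))" for k
  proof -
    have "convergent (\<lambda>i. g ((sub.diagseq \<circ> (+) (Suc k)) i) (d k))"
    proof (rule sub.diagseq_holds)
      fix r' s n assume "strict_mono (r'::nat\<Rightarrow>nat)" "convergent (\<lambda>i. g (s i) (d n))"
      then show "convergent (\<lambda>i. g ((s \<circ> r') i) (d n))"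
        using convergent_subseq_convergent[of "\<lambda>i. g (s i) (d n)" r'] by (simp add: o_def)
    qed
    then obtain l where "(\<lambda>i. g (sub.diagseq (Suc k + i)) (d k)) \<longlonglongrightarrow> l"
      by (auto simp: convergent_def)
    then have "(\<lambda>i. g (sub.diagseq (i + Suc k)) (d k)) \<longlonglongrightarrow> l" by (simp add: add.commute)
    then have "(\<lambda>i. g (sub.diagseq i) (d k)) \<longlonglongrightarrow> l" by (rule LIMSEQ_offset)
    then show ?thesis unfolding r_def convergent_def by blast
  qed
  have cauchy: "Cauchy (\<lambda>i. g (r i) x)" for x
  proof (rule CauchyI)
    fix e :: real assume e: "e > 0"
    have "x \<in> closure C" using C by simp
    moreover have pos: "e / (3 * (M + 1)) > 0" using e M0 by simp
    ultimately obtain c where c: "c \<in> C" "dist c x < e / (3 * (M + 1))"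
      using closure_approachable[of x C] by blast
    obtain k where ck: "c = d k" using c dC by blast
    have "Cauchy (\<lambda>i. g (r i) (d k))" using convd convergent_Cauchy by blast
    then obtain N where N: "\<forall>m\<ge>N. \<forall>n\<ge>N. norm (g (r m) (d k) - g (r n) (d k)) < e / 3"
      using e unfolding Cauchy_iff by (meson divide_pos_pos zero_less_numeral)
    have Md: "M * norm (x - c) < e / 3"
    proof -
      have "M * norm (x - c) \<le> (M + 1) * norm (x - c)" by (simp add: mult_right_mono)
      also have "\<dots> < (M + 1) * (e / (3 * (M + 1)))"
        using c M0 by (intro mult_strict_left_mono) (auto simp: dist_norm norm_minus_commute)
      also have "\<dots> = e / 3" using M0 by (simp add: field_simps)
      finally show ?thesis .
    qed
    show "\<exists>N. \<forall>m\<ge>N. \<forall>n\<ge>N. norm (g (r m) x - g (r n) x) < e"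
    proof (intro exI allI impI)
      fix m n assume mn: "N \<le> m" "N \<le> n"
      have "g (r m) x - g (r n) x = g (r m) (x - c) + (g (r m) c - g (r n) c) - g (r n) (x - c)"
        by (simp add: blinfun.diff_right)
      then have "norm (g (r m) x - g (r n) x) \<le> \<bar>g (r m) (x - c)\<bar> + \<bar>g (r m) c - g (r n) c\<bar> + \<bar>g (r n) (x - c)\<bar>"
        by simp
      also have "\<dots> < e"
      proof -
        have "\<bar>g (r m) c - g (r n) c\<bar> < e / 3" using N mn ck by auto
        then show ?thesis using gb[of "r m" "x - c"] gb[of "r n" "x - c"] Md by linarith
      qed
      finally show "norm (g (r m) x - g (r n) x) < e" .
    qed
  qed
  define L0 where "L0 x = lim (\<lambda>i. g (r i) x)" for x
  have L0: "(\<lambda>i. g (r i) x) \<longlonglongrightarrow> L0 x" for x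
    using cauchy[of x] unfolding L0_def by (simp add: Cauchy_convergent_iff convergent_LIMSEQ_iff)
  have "bounded_linear L0"
  proof (rule bounded_linear_intro[where K=M])
    fix x y
    have "(\<lambda>i. g (r i) (x + y)) \<longlonglongrightarrow> L0 x + L0 y"
      using tendsto_add[OF L0[of x] L0[of y]] by (simp add: blinfun.add_right)
    then show "L0 (x + y) = L0 x + L0 y" using L0 LIMSEQ_unique by blast
  next
    fix a x
    have "(\<lambda>i. g (r i) (a *\<^sub>R x)) \<longlonglongrightarrow> a *\<^sub>R L0 x"
      using tendsto_scaleR[OF tendsto_const L0[of x]] by (simp add: blinfun.scaleR_right)
    then show "L0 (a *\<^sub>R x) = a *\<^sub>R L0 x" using L0 LIMSEQ_unique by blast
  next
    fix x
    have "(\<lambda>i. \<bar>g (r i) x\<bar>) \<longlonglongrightarrow> \<bar>L0 x\<bar>" using L0 by (intro tendsto_intros)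
    then have "\<bar>L0 x\<bar> \<le> M * norm x" using gb by (intro LIMSEQ_le_const2) auto
    then show "norm (L0 x) \<le> norm x * M" by (simp add: mult.commute)
  qed
  then have "blinfun_apply (Blinfun L0) = L0" by (rule bounded_linear_Blinfun_apply)
  then show ?thesis using rmono L0 by (intro exI[of _ r] exI[of _ "Blinfun L0"]) auto
qed



section \<open>Finite-dimensional spans\<close>

lemma span_BW:
  fixes B :: "'a::real_normed_vector set"
  assumes "finite B"
  shows "\<forall>v::nat\<Rightarrow>'a. (\<forall>n. v n \<in> span B) \<longrightarrow> bounded (range v) \<longrightarrow>
           (\<exists>r w. strict_mono r \<and> w \<in> span B \<and> (v \<circ> r) \<longlonglongrightarrow> w)"
  using assms
proof (induction B rule: finite_induct)
  case empty
  show ?case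
  proof (intro allI impI)
    fix v :: "nat \<Rightarrow> 'a" assume "\<forall>n. v n \<in> span {}"
    then have "v = (\<lambda>n. 0)" by auto
    then show "\<exists>r w. strict_mono r \<and> w \<in> span {} \<and> (v \<circ> r) \<longlonglongrightarrow> w"
      by (intro exI[of _ id] exI[of _ 0]) (auto simp: strict_mono_def o_def)
  qed
next
  case (insert b B)
  show ?case
  proof (cases "b \<in> span B")
    case True
    then show ?thesis using insert.IH span_redundant[OF True] by simp
  next
    case False
    have closedB: "closed (span B)"
      unfolding closed_sequential_limits
    proof (intro allI impI)
      fix u l assume ul: "(\<forall>n. u n \<in> span B) \<and> u \<longlonglongrightarrow> l"
      then have "bounded (range u)" using convergent_imp_bounded by blast
      then obtain r w where r: "strict_mono r" "w \<in> span B" "(u \<circ> r) \<longlonglongrightarrow> w"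
        using insert.IH ul by blast
      have "(u \<circ> r) \<longlonglongrightarrow> l" using LIMSEQ_subseq_LIMSEQ ul r(1) by blast
      then have "l = w" using r(3) LIMSEQ_unique by blast
      then show "l \<in> span B" using r(2) by simp
    qed
    define d where "d = infdist b (span B)"
    have d: "d > 0" unfolding d_def
      using infdist_pos_not_in_closed[OF closedB _ False] span_zero by blast
    have low: "\<bar>t\<bar> * d \<le> norm (t *\<^sub>R b + u)" if "u \<in> span B" for t u
    proof (cases "t = 0")
      case True then show ?thesis by simp
    next
      case False
      have m: "- ((1/t) *\<^sub>R u) \<in> span B" using that by (simp add: span_neg span_scale)
      have "d \<le> dist b (- ((1/t) *\<^sub>R u))" unfolding d_def by (rule infdist_le[OF m])
      also have "dist b (- ((1/t) *\<^sub>R u)) = norm (b + (1/t) *\<^sub>R u)" by (simp add: dist_norm)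
      also have "b + (1/t) *\<^sub>R u = (1/t) *\<^sub>R (t *\<^sub>R b + u)" using False by (simp add: algebra_simps)
      also have "norm \<dots> = norm (t *\<^sub>R b + u) / \<bar>t\<bar>" by simp
      finally have "d \<le> norm (t *\<^sub>R b + u) / \<bar>t\<bar>" .
      then show ?thesis using False by (simp add: field_simps)
    qed
    show ?thesis
    proof (intro allI impI)
      fix v :: "nat \<Rightarrow> 'a" assume v: "\<forall>n. v n \<in> span (insert b B)" and bv: "bounded (range v)"
      obtain K where K: "\<And>n. norm (v n) \<le> K" using bv unfolding bounded_iff by blast
      have "\<exists>t. v n - t *\<^sub>R b \<in> span B" for n using v span_insert[of b B] by blast
      then obtain t where t: "\<And>n. v n - t n *\<^sub>R b \<in> span B" by metis
      define u where "u n = v n - t n *\<^sub>R b" for n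
      have u: "u n \<in> span B" for n using t u_def by simp
      have vtu: "v n = t n *\<^sub>R b + u n" for n using u_def by simp
      have tb: "\<bar>t n\<bar> \<le> K / d" for n
        using low[OF u[of n], of "t n"] K[of n] d vtu[of n] by (simp add: field_simps)
      have "bounded (range t)" unfolding bounded_iff using tb by (auto simp: real_norm_def)
      then obtain \<tau> r1 where r1: "strict_mono r1" "(t \<circ> r1) \<longlonglongrightarrow> \<tau>"
        using bounded_imp_convergent_subsequence by blast
      have ub: "norm (u n) \<le> K + K / d * norm b" for n
      proof -
        have "norm (u n) \<le> norm (v n) + norm (t n *\<^sub>R b)" unfolding u_def by (rule norm_triangle_ineq4)
        also have "norm (t n *\<^sub>R b) \<le> K / d * norm b" using mult_right_mono[OF tb[of n] norm_ge_zero[of b]] by simp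
        finally show ?thesis using K[of n] by linarith
      qed
      have "bounded (range (u \<circ> r1))" unfolding bounded_iff using ub by auto
      moreover have "\<forall>n. (u \<circ> r1) n \<in> span B" using u by simp
      ultimately obtain r2 w where r2: "strict_mono r2" "w \<in> span B" "((u \<circ> r1) \<circ> r2) \<longlonglongrightarrow> w"
        using insert.IH by blast
      have "((t \<circ> r1) \<circ> r2) \<longlonglongrightarrow> \<tau>" using LIMSEQ_subseq_LIMSEQ[OF r1(2) r2(1)] .
      then have "(\<lambda>n. ((t \<circ> r1) \<circ> r2) n *\<^sub>R b + ((u \<circ> r1) \<circ> r2) n) \<longlonglongrightarrow> \<tau> *\<^sub>R b + w"
        using r2(3) by (intro tendsto_intros)
      then have "(v \<circ> (r1 \<circ> r2)) \<longlonglongrightarrow> \<tau> *\<^sub>R b + w" by (simp add: vtu o_def)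
      moreover have "strict_mono (r1 \<circ> r2)" using r1(1) r2(1) by (rule strict_mono_o)
      moreover have "\<tau> *\<^sub>R b + w \<in> span (insert b B)"
        using r2(2) by (meson span_add span_base span_mono span_scale insertI1 subset_insertI subsetD)
      ultimately show "\<exists>r w. strict_mono r \<and> w \<in> span (insert b B) \<and> (v \<circ> r) \<longlonglongrightarrow> w" by blast
    qed
  qed
qed

lemma span_separable:
  fixes B :: "'a::real_normed_vector set"
  assumes "finite B"
  shows "\<exists>C. countable C \<and> C \<subseteq> span B \<and> span B \<subseteq> closure C"
  using assms
proof (induction B rule: finite_induct)
  case empty
  then show ?case by (intro exI[of _ "{0}"]) auto
next
  case (insert b B)
  then obtain C where C: "countable C" "C \<subseteq> span B" "span B \<subseteq> closure C" by blast
  define C' where "C' = (\<lambda>(c,q). c + real_of_rat q *\<^sub>R b) ` (C \<times> (UNIV :: rat set))"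
  have "countable C'" unfolding C'_def using C(1) by (intro countable_image countable_SIGMA) auto
  moreover have "C' \<subseteq> span (insert b B)"
  proof
    fix x assume "x \<in> C'"
    then obtain c q where "x = c + real_of_rat q *\<^sub>R b" "c \<in> C" unfolding C'_def by auto
    then show "x \<in> span (insert b B)" using C(2)
      by (meson span_add span_base span_mono span_scale insertI1 subset_insertI subsetD)
  qed
  moreover have "span (insert b B) \<subseteq> closure C'"
  proof
    fix x assume "x \<in> span (insert b B)"
    then obtain k where k: "x - k *\<^sub>R b \<in> span B" using span_insert[of b B] by blast
    define u where "u = x - k *\<^sub>R b"
    have uc: "u \<in> closure C" using k C(3) u_def by blast
    show "x \<in> closure C'"
      unfolding closure_approachable
    proof (intro allI impI)
      fix e :: real assume e: "e > 0"
      obtain c where c: "c \<in> C" "dist c u < e / 2" using uc e closure_approachable[of u C]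
        by (meson half_gt_zero)
      have pe: "e / (2 * (norm b + 1)) > 0" using e by (simp add: add_nonneg_pos)
      obtain r where r: "r \<in> \<rat>" "k < r" "r < k + e / (2 * (norm b + 1))"
        using Rats_dense_in_real[of k "k + e / (2 * (norm b + 1))"] pe by auto
      obtain q where q: "r = real_of_rat q" using r(1) Rats_cases by blast
      have "c + r *\<^sub>R b \<in> C'" unfolding C'_def using c(1) q by (auto intro!: image_eqI[of _ _ "(c, q)"])
      moreover have "dist (c + r *\<^sub>R b) x < e"
      proof -
        have "x = u + k *\<^sub>R b" using u_def by simp
        then have "c + r *\<^sub>R b - x = (c - u) + (r - k) *\<^sub>R b" by (simp add: algebra_simps)
        then have "dist (c + r *\<^sub>R b) x \<le> norm (c - u) + \<bar>r - k\<bar> * norm b"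
          by (metis dist_norm norm_scaleR norm_triangle_ineq)
        also have "\<bar>r - k\<bar> * norm b \<le> e / (2 * (norm b + 1)) * norm b"
          using r by (intro mult_right_mono) auto
        also have "\<dots> \<le> e / 2"
        proof -
          have "e / (2 * (norm b + 1)) * norm b = (e / 2) * (norm b / (norm b + 1))" by (simp add: field_simps)
          also have "\<dots> \<le> (e / 2) * 1"
          proof (rule mult_left_mono)
            have "0 < norm b + 1" by (simp add: add_nonneg_pos)
            then show "norm b / (norm b + 1) \<le> 1" by (simp add: divide_le_eq_1)
          qed (use e in auto)
          finally show ?thesis by simp
        qed
        finally show ?thesis using c(2) by (simp add: dist_norm)
      qed
      ultimately show "\<exists>y\<in>C'. dist y x < e" by blast
    qed
  qed
  ultimately show ?case by blast
qed



lemma norm_exists_big: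
  fixes f :: "'a::real_normed_vector \<Rightarrow>\<^sub>L real"
  assumes "norm f > c" "c \<ge> 0"
  shows "\<exists>y. norm y \<le> 1 \<and> \<bar>f y\<bar> > c"
proof (rule ccontr)
  assume "\<not> ?thesis"
  then have H: "norm y \<le> 1 \<Longrightarrow> \<bar>f y\<bar> \<le> c" for y by (meson not_less)
  have "\<bar>f y\<bar> \<le> c * norm y" for y
  proof (cases "y = 0")
    case True then show ?thesis by simp
  next
    case False
    have "\<bar>f ((1 / norm y) *\<^sub>R y)\<bar> \<le> c" using H False by simp
    then have "\<bar>f y\<bar> / norm y \<le> c" using False by (simp add: blinfun.scaleR_right abs_mult)
    then show ?thesis using False by (simp add: divide_le_eq mult.commute)
  qed
  then have "norm f \<le> c" using assms(2) by (intro norm_blinfun_bound) auto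
  then show False using assms(1) by simp
qed

lemma fin_rank_to_zero:
  fixes \<phi> :: "nat \<Rightarrow> ('a::real_normed_vector \<Rightarrow>\<^sub>L real)" and P :: "'a \<Rightarrow>\<^sub>L 'a"
  assumes B: "finite B" and PB: "\<And>y. P y \<in> span B"
    and w0: "\<And>x. (\<lambda>n. \<phi> n x) \<longlonglongrightarrow> 0" and M: "\<And>n. norm (\<phi> n) \<le> M"
  shows "(\<lambda>n. norm (\<phi> n o\<^sub>L P)) \<longlonglongrightarrow> 0"
proof (rule ccontr)
  assume "\<not> ?thesis"
  then obtain e where e: "e > 0" and fr: "\<forall>N. \<exists>n\<ge>N. \<not> norm (\<phi> n o\<^sub>L P) < e"
    unfolding LIMSEQ_iff by auto
  have "infinite {n. e \<le> norm (\<phi> n o\<^sub>L P)}"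
    unfolding infinite_nat_iff_unbounded_le using fr by (auto simp: not_less)
  from infinite_enumerate[OF this] obtain r :: "nat \<Rightarrow> nat" where r0: "strict_mono r" "\<forall>n. r n \<in> {n. e \<le> norm (\<phi> n o\<^sub>L P)}"
    by blast
  have r: "strict_mono r" "\<And>n. e \<le> norm (\<phi> (r n) o\<^sub>L P)" using r0 by auto
  have ex: "\<forall>n. \<exists>y. norm y \<le> 1 \<and> \<bar>(\<phi> (r n) o\<^sub>L P) y\<bar> > e / 2"
  proof
    fix n
    have "e / 2 < norm (\<phi> (r n) o\<^sub>L P)" using r(2)[of n] e by linarith
    then show "\<exists>y. norm y \<le> 1 \<and> \<bar>(\<phi> (r n) o\<^sub>L P) y\<bar> > e / 2"
      using e by (intro norm_exists_big) auto
  qed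
  from choice[OF ex] obtain y where y0: "\<forall>n. norm (y n) \<le> 1 \<and> \<bar>(\<phi> (r n) o\<^sub>L P) (y n)\<bar> > e / 2"
    by blast
  have y: "\<And>n. norm (y n) \<le> 1" "\<And>n. \<bar>\<phi> (r n) (P (y n))\<bar> > e / 2" using y0 by auto
  define v where "v n = P (y n)" for n
  have vb: "norm (v n) \<le> norm P" for n
    unfolding v_def using order_trans[OF norm_blinfun mult_left_mono[OF y(1) norm_ge_zero]] by simp
  have "bounded (range v)" unfolding bounded_iff using vb by blast
  moreover have "\<forall>n. v n \<in> span B" using PB v_def by simp
  ultimately obtain r2 w where r2: "strict_mono r2" "w \<in> span B" "(v \<circ> r2) \<longlonglongrightarrow> w"
    using span_BW[OF B] by blast
  define a where "a n = \<bar>\<phi> (r (r2 n)) w\<bar> + M * norm (v (r2 n) - w)" for n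
  have "(\<lambda>n. \<phi> ((r \<circ> r2) n) w) \<longlonglongrightarrow> 0"
    using LIMSEQ_subseq_LIMSEQ[OF w0[of w] strict_mono_o[OF r(1) r2(1)]] by (simp add: o_def)
  then have a1: "(\<lambda>n. \<bar>\<phi> (r (r2 n)) w\<bar>) \<longlonglongrightarrow> 0" using tendsto_rabs_zero by force
  have "(\<lambda>n. v (r2 n) - w) \<longlonglongrightarrow> 0" using r2(3) by (simp add: o_def LIM_zero)
  then have "(\<lambda>n. norm (v (r2 n) - w)) \<longlonglongrightarrow> 0" by (rule tendsto_norm_zero)
  then have a2: "(\<lambda>n. M * norm (v (r2 n) - w)) \<longlonglongrightarrow> 0" by (rule tendsto_mult_right_zero)
  have "a \<longlonglongrightarrow> 0" unfolding a_def using tendsto_add_zero[OF a1 a2] .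
  then have "eventually (\<lambda>n. a n < e / 2) sequentially" using e by (intro order_tendstoD(2)) auto
  then obtain N where N: "a N < e / 2" by (auto simp: eventually_sequentially)
  have "\<bar>\<phi> (r (r2 N)) (v (r2 N))\<bar> \<le> a N"
  proof -
    have "\<phi> (r (r2 N)) (v (r2 N)) = \<phi> (r (r2 N)) w + \<phi> (r (r2 N)) (v (r2 N) - w)"
      by (simp add: blinfun.diff_right)
    moreover have "\<bar>\<phi> (r (r2 N)) (v (r2 N) - w)\<bar> \<le> M * norm (v (r2 N) - w)"
      using order_trans[OF norm_blinfun mult_right_mono[OF M norm_ge_zero]] by simp
    ultimately show ?thesis unfolding a_def by linarith
  qed
  then show False using y(2)[of "r2 N"] N v_def by simp
qed

lemma separable_euclidean_iff:
  "separable_space (euclidean :: 'a::metric_space topology) \<longleftrightarrow> (\<exists>C::'a set. countable C \<and> closure C = UNIV)"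
  unfolding separable_space_def by auto

lemma part1:
  fixes Q :: "nat \<Rightarrow> ('x::banach \<Rightarrow>\<^sub>L 'x)"
  assumes fdd: "is_FDD Q" and unc: "is_1UFDD Q" and shr: "is_shrinking Q"
  shows "au_star TYPE('x)"
proof -
  have idem: "\<And>j. Q j o\<^sub>L Q j = Q j" and orth: "\<And>i j. i \<noteq> j \<Longrightarrow> Q i o\<^sub>L Q j = 0"
    and sm: "\<And>y. (\<lambda>j. Q j y) sums y" and fin: "\<forall>j. \<exists>B. finite B \<and> range (blinfun_apply (Q j)) \<subseteq> span B"
    using fdd unfolding is_FDD_def by blast+
  from choice[OF fin] obtain Bs where Bs: "\<forall>j. finite (Bs j) \<and> range (blinfun_apply (Q j)) \<subseteq> span (Bs j)"
    by blast
  have unc1: "norm (\<Sum>j<n. \<epsilon> j *\<^sub>R Q j y) \<le> norm y" if "\<forall>j. \<epsilon> j = 1 \<or> \<epsilon> j = -1" for \<epsilon> :: "nat \<Rightarrow> real" and n y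
    using unc that unfolding is_1UFDD_def by blast
  have QQ: "Q i (Q j y) = (if i = j then Q j y else 0)" for i j y
  proof (cases "i = j")
    case True
    then show ?thesis using arg_cong[OF idem[of j], of "\<lambda>T. blinfun_apply T y"] by simp
  next
    case False
    then show ?thesis using arg_cong[OF orth[OF False], of "\<lambda>T. blinfun_apply T y"] by simp
  qed
  define P where "P N = (\<Sum>j<N. Q j)" for N
  have Papp: "P N y = (\<Sum>j<N. Q j y)" for N y unfolding P_def by (simp add: blinfun.sum_left)
  have PP: "P N (P N y) = P N y" for N y
  proof -
    have "P N (P N y) = (\<Sum>i<N. Q i (P N y))" by (rule Papp)
    also have "\<dots> = (\<Sum>i<N. \<Sum>j<N. Q i (Q j y))" unfolding Papp[of N y] by (simp add: blinfun.sum_right)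
    also have "\<dots> = (\<Sum>i<N. Q i y)" by (simp add: QQ)
    finally show ?thesis by (simp add: Papp)
  qed
  have Plim: "(\<lambda>N. P N y) \<longlonglongrightarrow> y" for y using sm[of y] unfolding sums_def by (simp add: Papp)
  define U where "U N = (\<Union>j<N. Bs j)" for N
  have Ufin: "finite (U N)" for N unfolding U_def using Bs by auto
  have Pspan: "P N y \<in> span (U N)" for N y
    unfolding Papp
  proof (rule span_sum)
    fix j assume j: "j \<in> {..<N}"
    have "Q j y \<in> span (Bs j)" using Bs by auto
    moreover have "span (Bs j) \<subseteq> span (U N)" unfolding U_def using j by (intro span_mono) auto
    ultimately show "Q j y \<in> span (U N)" by blast
  qed
  have Rnorm: "norm (2 *\<^sub>R P N y - y) \<le> norm y" for N y
  proof -
    define \<epsilon> :: "nat \<Rightarrow> real" where "\<epsilon> j = (if j < N then 1 else -1)" for j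
    have eps: "\<forall>j. \<epsilon> j = 1 \<or> \<epsilon> j = -1" unfolding \<epsilon>_def by auto
    have eq: "(\<Sum>j<n. \<epsilon> j *\<^sub>R Q j y) = 2 *\<^sub>R P N y - P n y" if "N \<le> n" for n
    proof -
      have "(\<Sum>j<n. \<epsilon> j *\<^sub>R Q j y) = (\<Sum>j<n. 2 *\<^sub>R (if j < N then Q j y else 0) - Q j y)"
        by (intro sum.cong) (auto simp: \<epsilon>_def scaleR_2)
      also have "\<dots> = 2 *\<^sub>R (\<Sum>j<n. (if j < N then Q j y else 0)) - P n y"
        by (simp add: sum_subtractf scaleR_sum_right Papp)
      also have "(\<Sum>j<n. (if j < N then Q j y else 0)) = (\<Sum>j\<in>{j\<in>{..<n}. j < N}. Q j y)"
        using sum.inter_filter[of "{..<n}" "\<lambda>j. Q j y" "\<lambda>j. j < N"] by simp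
      also have "{j\<in>{..<n}. j < N} = {..<N}" using that by auto
      finally show ?thesis by (simp add: Papp)
    qed
    have "(\<lambda>n. 2 *\<^sub>R P N y - P n y) \<longlonglongrightarrow> 2 *\<^sub>R P N y - y" using Plim[of y] by (intro tendsto_intros)
    then have "(\<lambda>n. norm (2 *\<^sub>R P N y - P n y)) \<longlonglongrightarrow> norm (2 *\<^sub>R P N y - y)" by (rule tendsto_norm)
    moreover have "\<forall>n\<ge>N. norm (2 *\<^sub>R P N y - P n y) \<le> norm y" using eq unc1[OF eps] by metis
    ultimately show ?thesis by (intro LIMSEQ_le_const2) auto
  qed
  define R where "R N = 2 *\<^sub>R P N - id_blinfun" for N
  have Rapp: "R N y = 2 *\<^sub>R P N y - y" for N y unfolding R_def by (simp add: blinfun.diff_left blinfun.scaleR_left)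
  have PR: "P N (R N y) = P N y" for N y by (simp add: Rapp blinfun.diff_right blinfun.add_right PP scaleR_2)
  have Rcomp: "norm (g o\<^sub>L R N) \<le> norm g" for g :: "'x \<Rightarrow>\<^sub>L real" and N
  proof (rule norm_blinfun_bound)
    fix y
    have "norm (g (R N y)) \<le> norm g * norm (R N y)" by (rule norm_blinfun)
    also have "\<dots> \<le> norm g * norm y" using Rnorm[of N y] by (simp add: Rapp mult_left_mono)
    finally show "norm ((g o\<^sub>L R N) y) \<le> norm g * norm y" by simp
  qed simp
  have sym: "norm ((xs o\<^sub>L P N) + (\<phi> - (\<phi> o\<^sub>L P N))) = norm ((xs o\<^sub>L P N) - (\<phi> - (\<phi> o\<^sub>L P N)))"
    for xs \<phi> :: "'x \<Rightarrow>\<^sub>L real" and N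
  proof -
    have c1: "((xs o\<^sub>L P N) + (\<phi> - (\<phi> o\<^sub>L P N))) o\<^sub>L R N = (xs o\<^sub>L P N) - (\<phi> - (\<phi> o\<^sub>L P N))"
      by (rule blinfun_eqI) (simp add: PR Rapp blinfun.diff_right blinfun.scaleR_right blinfun.add_left blinfun.diff_left blinfun.add_right algebra_simps scaleR_2 PP)
    have c2: "((xs o\<^sub>L P N) - (\<phi> - (\<phi> o\<^sub>L P N))) o\<^sub>L R N = (xs o\<^sub>L P N) + (\<phi> - (\<phi> o\<^sub>L P N))"
      by (rule blinfun_eqI) (simp add: PR Rapp blinfun.diff_right blinfun.scaleR_right blinfun.add_left blinfun.diff_left blinfun.add_right algebra_simps scaleR_2 PP)
    show ?thesis using Rcomp[of "(xs o\<^sub>L P N) + (\<phi> - (\<phi> o\<^sub>L P N))" N] Rcomp[of "(xs o\<^sub>L P N) - (\<phi> - (\<phi> o\<^sub>L P N))" N]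
      unfolding c1 c2 by linarith
  qed
  have "\<forall>N. \<exists>C. countable C \<and> C \<subseteq> span (U N) \<and> span (U N) \<subseteq> closure C"
    using span_separable Ufin by blast
  from choice[OF this] obtain C where C: "\<forall>N. countable (C N) \<and> C N \<subseteq> span (U N) \<and> span (U N) \<subseteq> closure (C N)"
    by blast
  define D where "D = (\<Union>N. C N)"
  have "countable D" unfolding D_def using C by auto
  moreover have "closure D = UNIV"
  proof -
    have "y \<in> closure D" for y
    proof (rule closed_sequentially[OF closed_closure _ Plim[of y]])
      fix N
      show "P N y \<in> closure D"
      proof -
        have "P N y \<in> closure (C N)" using Pspan C by blast
        also have "closure (C N) \<subseteq> closure D" unfolding D_def by (intro closure_mono) auto
        finally show "P N y \<in> closure D" .
      qed
    qed
    then show ?thesis by auto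
  qed
  ultimately have sep: "separable_space (euclidean :: 'x topology)"
    unfolding separable_euclidean_iff by blast
  have shrink: "(\<lambda>N. (xs o\<^sub>L P N)) \<longlonglongrightarrow> xs" for xs :: "'x \<Rightarrow>\<^sub>L real"
  proof -
    have "(\<lambda>N. \<Sum>j<N. xs o\<^sub>L Q j) \<longlonglongrightarrow> xs" using shr unfolding is_shrinking_def sums_def by blast
    moreover have "(\<Sum>j<N. xs o\<^sub>L Q j) = (xs o\<^sub>L P N)" for N
      by (rule blinfun_eqI) (simp add: Papp blinfun.sum_left blinfun.sum_right)
    ultimately show ?thesis by simp
  qed
  have "(\<lambda>n. norm (xs + xn n) - norm (xs - xn n)) \<longlonglongrightarrow> 0"
    if wn: "weak_star_null xn" for xs :: "'x \<Rightarrow>\<^sub>L real" and xn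
  proof -
    have w0: "\<And>x. (\<lambda>n. xn n x) \<longlonglongrightarrow> 0" using wn unfolding weak_star_null_def by blast
    have "\<exists>B. \<forall>n. \<bar>xn n x\<bar> \<le> B" for x
    proof -
      have "Bseq (\<lambda>n. xn n x)" using w0[of x] convergent_imp_Bseq convergentI by blast
      then show ?thesis unfolding Bseq_def by (auto simp: real_norm_def)
    qed
    then obtain M where M: "\<And>n. norm (xn n) \<le> M" using UBP by blast
    show ?thesis
    proof (rule LIMSEQ_I)
      fix e :: real assume e: "e > 0"
      obtain N where N: "norm ((xs o\<^sub>L P N) - xs) < e / 4"
        using shrink[of xs] e unfolding LIMSEQ_iff by (meson divide_pos_pos order_refl zero_less_numeral)
      have "(\<lambda>n. norm ((xn n o\<^sub>L P N))) \<longlonglongrightarrow> 0"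
        using fin_rank_to_zero[OF Ufin[of N] Pspan w0 M] .
      then obtain N2 where N2: "\<forall>n\<ge>N2. norm (norm ((xn n o\<^sub>L P N)) - 0) < e / 4"
        using e unfolding LIMSEQ_iff by (meson divide_pos_pos zero_less_numeral)
      show "\<exists>no. \<forall>n\<ge>no. norm (norm (xs + xn n) - norm (xs - xn n) - 0) < e"
      proof (intro exI allI impI)
        fix n assume n: "N2 \<le> n"
        define a where "a = (xs o\<^sub>L P N)"
        define b where "b = xn n - (xn n o\<^sub>L P N)"
        define \<delta> where "\<delta> = norm (xs - a) + norm ((xn n o\<^sub>L P N))"
        have d1: "norm (xs - a) < e / 4" unfolding a_def using N by (simp add: norm_minus_commute)
        have d2: "norm ((xn n o\<^sub>L P N)) < e / 4" using N2 n by simp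
        have d: "\<delta> < e / 2" unfolding \<delta>_def using d1 d2 by linarith
        have e1: "xs + xn n = (a + b) + ((xs - a) + (xn n o\<^sub>L P N))" unfolding a_def b_def by simp
        have e2: "xs - xn n = (a - b) + ((xs - a) - (xn n o\<^sub>L P N))" unfolding a_def b_def by simp
        have g: "\<bar>norm (u + v) - norm u\<bar> \<le> norm v" for u v :: "'x \<Rightarrow>\<^sub>L real"
          using norm_triangle_ineq3[of "u + v" u] by simp
        have "\<bar>norm (xs + xn n) - norm (a + b)\<bar> \<le> norm ((xs - a) + (xn n o\<^sub>L P N))"
          by (subst e1) (rule g)
        then have i1: "\<bar>norm (xs + xn n) - norm (a + b)\<bar> \<le> \<delta>"
          using norm_triangle_ineq[of "xs - a" "(xn n o\<^sub>L P N)"] unfolding \<delta>_def by linarith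
        have "\<bar>norm (xs - xn n) - norm (a - b)\<bar> \<le> norm ((xs - a) - (xn n o\<^sub>L P N))"
          by (subst e2) (rule g)
        then have i2: "\<bar>norm (xs - xn n) - norm (a - b)\<bar> \<le> \<delta>"
          using norm_triangle_ineq4[of "xs - a" "(xn n o\<^sub>L P N)"] unfolding \<delta>_def by linarith
        have "norm (a + b) = norm (a - b)" unfolding a_def b_def by (rule sym)
        then show "norm (norm (xs + xn n) - norm (xs - xn n) - 0) < e" using i1 i2 d by simp
      qed
    qed
  qed
  then show ?thesis unfolding au_star_def using sep by blast
qed



lemma blinfun_cont: "continuous_on S (blinfun_apply f)"
  by (intro linear_continuous_on blinfun.bounded_linear_right)

lemma part2q:
  fixes q :: "'y::banach \<Rightarrow>\<^sub>L 'q::banach" and Z :: "'y set"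
  assumes au: "au_star TYPE('y)" and sq: "surj (blinfun_apply q)" and ker: "{y. q y = 0} = Z"
    and nq: "\<forall>y. norm (q y) = infdist y Z"
  shows "au_star TYPE('q)"
proof -
  have sepY: "separable_space (euclidean :: 'y topology)"
    and auY: "\<And>(xs::'y \<Rightarrow>\<^sub>L real) xn. weak_star_null xn \<Longrightarrow>
        (\<lambda>n. norm (xs + xn n) - norm (xs - xn n)) \<longlonglongrightarrow> 0"
    using au unfolding au_star_def by blast+
  obtain C :: "'y set" where C: "countable C" "closure C = UNIV"
    using sepY unfolding separable_euclidean_iff by blast
  have "closure (q ` C) = UNIV"
  proof -
    have "q ` closure C \<subseteq> closure (q ` C)"
      by (rule image_closure_subset[OF blinfun_cont closed_closure closure_subset])
    then show ?thesis using C(2) sq by auto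
  qed
  then have sepQ: "separable_space (euclidean :: 'q topology)"
    unfolding separable_euclidean_iff using C(1) by blast
  have Z0: "0 \<in> Z" using ker by auto
  have nqle: "norm q \<le> 1"
  proof (rule norm_blinfun_bound)
    fix y
    have "infdist y Z \<le> dist y 0" by (rule infdist_le[OF Z0])
    then show "norm (q y) \<le> 1 * norm y" using nq by simp
  qed simp
  have ncomp: "norm (f o\<^sub>L q) = norm f" for f :: "'q \<Rightarrow>\<^sub>L real"
  proof (rule antisym)
    show "norm (f o\<^sub>L q) \<le> norm f"
      using order_trans[OF norm_blinfun_compose mult_left_mono[OF nqle norm_ge_zero]] by simp
    show "norm f \<le> norm (f o\<^sub>L q)"
    proof (rule norm_blinfun_bound)
      fix w
      obtain y where y: "q y = w" using sq by (metis surjD)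
      show "norm (f w) \<le> norm (f o\<^sub>L q) * norm w"
      proof (rule field_le_epsilon)
        fix e :: real assume e: "e > 0"
        define \<epsilon> where "\<epsilon> = e / (norm (f o\<^sub>L q) + 1)"
        have \<epsilon>: "\<epsilon> > 0" unfolding \<epsilon>_def using e by (simp add: add_nonneg_pos)
        have "infdist y Z = norm w" using nq y by metis
        then have "infdist y Z < norm w + \<epsilon>" using \<epsilon> by simp
        then have "(INF z\<in>Z. dist y z) < norm w + \<epsilon>" using infdist_notempty[of Z y] Z0 by (metis empty_iff)
        then obtain z where z: "z \<in> Z" "dist y z < norm w + \<epsilon>"
          using cINF_less_iff[of Z "dist y" "norm w + \<epsilon>"] Z0
          by (auto simp: bdd_below_def intro: zero_le_dist)
        have "q (y - z) = w" using z ker y by (auto simp: blinfun.diff_right)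
        then have "f w = (f o\<^sub>L q) (y - z)" by simp
        then have "norm (f w) \<le> norm (f o\<^sub>L q) * norm (y - z)" using norm_blinfun by metis
        also have "\<dots> \<le> norm (f o\<^sub>L q) * (norm w + \<epsilon>)"
          using z by (intro mult_left_mono) (auto simp: dist_norm)
        also have "\<dots> = norm (f o\<^sub>L q) * norm w + norm (f o\<^sub>L q) * \<epsilon>" by (simp add: algebra_simps)
        also have "norm (f o\<^sub>L q) * \<epsilon> \<le> e"
        proof -
          have "norm (f o\<^sub>L q) * \<epsilon> = e * (norm (f o\<^sub>L q) / (norm (f o\<^sub>L q) + 1))"
            unfolding \<epsilon>_def by (simp add: field_simps)
          also have "\<dots> \<le> e * 1"
          proof (rule mult_left_mono)
            have "0 < norm (f o\<^sub>L q) + 1" by (simp add: add_nonneg_pos)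
            then show "norm (f o\<^sub>L q) / (norm (f o\<^sub>L q) + 1) \<le> 1" by (simp add: divide_le_eq_1)
          qed (use e in auto)
          finally show ?thesis by simp
        qed
        finally show "norm (f w) \<le> norm (f o\<^sub>L q) * norm w + e" by simp
      qed
    qed simp
  qed
  have "(\<lambda>n. norm (xs + xn n) - norm (xs - xn n)) \<longlonglongrightarrow> 0"
    if wn: "weak_star_null xn" for xs :: "'q \<Rightarrow>\<^sub>L real" and xn
  proof -
    have "weak_star_null (\<lambda>n. xn n o\<^sub>L q)"
      using wn unfolding weak_star_null_def by simp
    from auY[OF this, of "xs o\<^sub>L q"]
    have lim: "(\<lambda>n. norm ((xs o\<^sub>L q) + (xn n o\<^sub>L q)) - norm ((xs o\<^sub>L q) - (xn n o\<^sub>L q))) \<longlonglongrightarrow> 0" .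
    have "(xs o\<^sub>L q) + (xn n o\<^sub>L q) = (xs + xn n) o\<^sub>L q" for n
      by (rule blinfun_eqI) (simp add: blinfun.add_left)
    moreover have "(xs o\<^sub>L q) - (xn n o\<^sub>L q) = (xs - xn n) o\<^sub>L q" for n
      by (rule blinfun_eqI) (simp add: blinfun.diff_left)
    ultimately show ?thesis using lim by (simp add: ncomp)
  qed
  then show ?thesis unfolding au_star_def using sepQ by blast
qed

lemma part2s:
  fixes T :: "'s::banach \<Rightarrow>\<^sub>L 'y::banach"
  assumes au: "au_star TYPE('y)" and iso: "\<forall>x. norm (T x) = norm x"
  shows "au_star TYPE('s)"
proof -
  have sepY: "separable_space (euclidean :: 'y topology)"
    and auY: "\<And>(xs::'y \<Rightarrow>\<^sub>L real) xn. weak_star_null xn \<Longrightarrow>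
        (\<lambda>n. norm (xs + xn n) - norm (xs - xn n)) \<longlonglongrightarrow> 0"
    using au unfolding au_star_def by blast+
  obtain C :: "'y set" where C: "countable C" "closure C = UNIV"
    using sepY unfolding separable_euclidean_iff by blast
  have distT: "dist (T a) (T b) = dist a b" for a b
    using iso[rule_format, of "a - b"] by (simp add: dist_norm blinfun.diff_right)
  define I where "I = {(c, k). c \<in> C \<and> (\<exists>s. dist (T s) c < inverse (real (Suc k)))}"
  define sel where "sel = (\<lambda>(c, k). SOME s. dist (T s) c < inverse (real (Suc k)))"
  define D where "D = sel ` I"
  have Isub: "I \<subseteq> C \<times> (UNIV :: nat set)" unfolding I_def by auto
  have "countable (C \<times> (UNIV :: nat set))" using C(1) by (intro countable_SIGMA) auto
  then have "countable I" using Isub countable_subset by blast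
  then have cD: "countable D" unfolding D_def by simp
  have "closure D = UNIV"
  proof -
    have "s \<in> closure D" for s
      unfolding closure_approachable
    proof (intro allI impI)
      fix e :: real assume e: "e > 0"
      obtain k where k: "inverse (real (Suc k)) < e / 2" using reals_Archimedean[of "e/2"] e by auto
      have ip: "inverse (real (Suc k)) > 0" by simp
      have "T s \<in> closure C" using C by simp
      then obtain c where c: "c \<in> C" "dist c (T s) < inverse (real (Suc k))"
        using closure_approachable[of "T s" C] ip by blast
      have cI: "(c, k) \<in> I" unfolding I_def using c by (auto simp: dist_commute)
      then have "\<exists>s. dist (T s) c < inverse (real (Suc k))" unfolding I_def by auto
      then have s': "dist (T (sel (c, k))) c < inverse (real (Suc k))"
        unfolding sel_def by (auto intro: someI_ex)
      have "dist (sel (c, k)) s = dist (T (sel (c, k))) (T s)" by (simp add: distT)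
      also have "\<dots> \<le> dist (T (sel (c, k))) c + dist c (T s)" by (rule dist_triangle)
      also have "\<dots> < e" using s' c(2) k by linarith
      finally show "\<exists>y\<in>D. dist y s < e" using cI D_def by blast
    qed
    then show ?thesis by auto
  qed
  with cD have sepS: "separable_space (euclidean :: 's topology)"
    unfolding separable_euclidean_iff by blast
  have nT: "norm T \<le> 1" using iso by (intro norm_blinfun_bound) auto
  have ncT: "norm (K o\<^sub>L T) \<le> norm K" for K :: "'y \<Rightarrow>\<^sub>L real"
    using order_trans[OF norm_blinfun_compose mult_left_mono[OF nT norm_ge_zero]] by simp
  have claim: "\<exists>N. \<forall>n\<ge>N. norm (xs + t n) - norm (xs - t n) > - e"
    if wt: "weak_star_null t" and e: "e > 0" for xs :: "'s \<Rightarrow>\<^sub>L real" and t and e :: real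
  proof (rule ccontr)
    assume nc: "\<not> ?thesis"
    have "infinite {n. norm (xs + t n) - norm (xs - t n) \<le> - e}"
      unfolding infinite_nat_iff_unbounded_le using nc by (auto simp: not_less)
    from infinite_enumerate[OF this] obtain r :: "nat \<Rightarrow> nat" where
      r0: "strict_mono r" "\<forall>n. r n \<in> {n. norm (xs + t n) - norm (xs - t n) \<le> - e}" by blast
    define t' where "t' n = t (r n)" for n
    have bad: "norm (xs + t' n) - norm (xs - t' n) \<le> - e" for n using r0 t'_def by auto
    have t'0: "(\<lambda>n. t' n x) \<longlonglongrightarrow> 0" for x
      using LIMSEQ_subseq_LIMSEQ[OF wt[unfolded weak_star_null_def, rule_format, of x] r0(1)]
      by (simp add: t'_def o_def)
    have "\<exists>B. \<forall>n. \<bar>t' n x\<bar> \<le> B" for x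
    proof -
      have "Bseq (\<lambda>n. t' n x)" using t'0[of x] convergent_imp_Bseq convergentI by blast
      then show ?thesis unfolding Bseq_def by (auto simp: real_norm_def)
    qed
    then obtain M where M: "\<And>n. norm (t' n) \<le> M" using UBP by blast
    obtain g where g: "g o\<^sub>L T = xs" "norm g \<le> norm xs" using HB_isometry[OF iso] by blast
    have "\<forall>n. \<exists>h. h o\<^sub>L T = xs + t' n \<and> norm h \<le> norm (xs + t' n)"
      using HB_isometry[OF iso] by blast
    from choice[OF this] obtain h where h: "\<forall>n. h n o\<^sub>L T = xs + t' n \<and> norm (h n) \<le> norm (xs + t' n)"
      by blast
    have gT: "g (T s) = xs s" for s using g(1) by (metis blinfun_apply_blinfun_compose)
    have hT: "h n (T s) = xs s + t' n s" for n s
      using h by (metis blinfun_apply_blinfun_compose blinfun.add_left)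
    have hn: "norm (h n) \<le> norm (xs + t' n)" for n using h by blast
    define u where "u n = h n - g" for n
    have ub: "norm (u n) \<le> 2 * norm xs + M" for n
    proof -
      have "norm (u n) \<le> norm (h n) + norm g" unfolding u_def by (rule norm_triangle_ineq4)
      also have "norm (h n) \<le> norm xs + norm (t' n)"
        using order_trans[OF hn norm_triangle_ineq] .
      finally show ?thesis using g(2) M[of n] by linarith
    qed
    obtain r2 and L :: "'y \<Rightarrow>\<^sub>L real" where r2: "strict_mono r2" "\<forall>x. (\<lambda>n. u (r2 n) x) \<longlonglongrightarrow> L x"
      using alaoglu_seq[of C u "2 * norm xs + M", OF C ub] by blast
    have LT: "L (T s) = 0" for s
    proof -
      have "(\<lambda>n. u (r2 n) (T s)) \<longlonglongrightarrow> L (T s)" using r2 by blast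
      moreover have "u (r2 n) (T s) = t' (r2 n) s" for n
        unfolding u_def by (simp add: blinfun.diff_left hT gT)
      moreover have "(\<lambda>n. t' (r2 n) s) \<longlonglongrightarrow> 0"
        using LIMSEQ_subseq_LIMSEQ[OF t'0[of s] r2(1)] by (simp add: o_def)
      ultimately show ?thesis using LIMSEQ_unique by auto
    qed
    define w where "w n = u (r2 n) - L" for n
    have "weak_star_null w"
      unfolding weak_star_null_def
    proof
      fix x
      have "(\<lambda>n. u (r2 n) x - L x) \<longlonglongrightarrow> 0" using r2 LIM_zero by blast
      then show "(\<lambda>n. w n x) \<longlonglongrightarrow> 0" unfolding w_def by (simp add: blinfun.diff_left)
    qed
    from auY[OF this, of "g + L"]
    have lim: "(\<lambda>n. norm ((g + L) + w n) - norm ((g + L) - w n)) \<longlonglongrightarrow> 0" .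
    have e1: "(g + L) + w n = h (r2 n)" for n unfolding w_def u_def by simp
    have e2: "((g + L) - w n) o\<^sub>L T = xs - t' (r2 n)" for n
      by (rule blinfun_eqI) (simp add: w_def u_def blinfun.diff_left blinfun.add_left hT gT LT)
    have low: "norm ((g + L) + w n) - norm ((g + L) - w n) \<le> norm (xs + t' (r2 n)) - norm (xs - t' (r2 n))" for n
      using hn[of "r2 n"] ncT[of "(g + L) - w n"] unfolding e1 e2 by linarith
    have "eventually (\<lambda>n. - e < norm ((g + L) + w n) - norm ((g + L) - w n)) sequentially"
      using lim e by (intro order_tendstoD(1)) auto
    then obtain N where "- e < norm ((g + L) + w N) - norm ((g + L) - w N)"
      by (auto simp: eventually_sequentially)
    then show False using low[of N] bad[of "r2 N"] by linarith
  qed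
  have "(\<lambda>n. norm (xs + xn n) - norm (xs - xn n)) \<longlonglongrightarrow> 0"
    if wn: "weak_star_null xn" for xs :: "'s \<Rightarrow>\<^sub>L real" and xn
  proof (rule LIMSEQ_I)
    fix e :: real assume e: "e > 0"
    have wn': "weak_star_null (\<lambda>n. - xn n)"
      using wn unfolding weak_star_null_def by (auto intro: tendsto_minus_cancel_left[THEN iffD1] simp: blinfun.minus_left)
    obtain N1 where N1: "\<forall>n\<ge>N1. norm (xs + xn n) - norm (xs - xn n) > - e" using claim[OF wn e] by blast
    obtain N2 where N2: "\<forall>n\<ge>N2. norm (xs + - xn n) - norm (xs - - xn n) > - e" using claim[OF wn' e] by blast
    show "\<exists>no. \<forall>n\<ge>no. norm (norm (xs + xn n) - norm (xs - xn n) - 0) < e"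
    proof (intro exI allI impI)
      fix n assume "max N1 N2 \<le> n"
      then have "norm (xs + xn n) - norm (xs - xn n) > - e" "norm (xs - xn n) - norm (xs + xn n) > - e"
        using N1 N2 by auto
      then show "norm (norm (xs + xn n) - norm (xs - xn n) - 0) < e" by simp
    qed
  qed
  then show ?thesis unfolding au_star_def using sepS by blast
qed


theorem proposition2p4:
  shows "(\<forall>Q :: nat \<Rightarrow> ('x::banach \<Rightarrow>\<^sub>L 'x).
            is_FDD Q \<and> is_1UFDD Q \<and> is_shrinking Q \<longrightarrow> au_star TYPE('x))
       \<and> (au_star TYPE('y::banach) \<longrightarrow>
            (\<forall>(X::'y set) (T::'s::banach \<Rightarrow>\<^sub>L 'y).
               closed X \<and> subspace X \<and> range (blinfun_apply T) = X \<and>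
               (\<forall>x. norm (T x) = norm x) \<longrightarrow> au_star TYPE('s))
          \<and> (\<forall>(Z::'y set) (q::'y \<Rightarrow>\<^sub>L 'q::banach).
               closed Z \<and> subspace Z \<and> surj (blinfun_apply q) \<and>
               {y. q y = 0} = Z \<and> (\<forall>y. norm (q y) = infdist y Z) \<longrightarrow> au_star TYPE('q)))"
proof (intro conjI)
  show "\<forall>Q :: nat \<Rightarrow> ('x::banach \<Rightarrow>\<^sub>L 'x).
            is_FDD Q \<and> is_1UFDD Q \<and> is_shrinking Q \<longrightarrow> au_star TYPE('x)"
    using part1 by blast
  show "au_star TYPE('y::banach) \<longrightarrow>
            (\<forall>(X::'y set) (T::'s::banach \<Rightarrow>\<^sub>L 'y).
               closed X \<and> subspace X \<and> range (blinfun_apply T) = X \<and>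
               (\<forall>x. norm (T x) = norm x) \<longrightarrow> au_star TYPE('s))
          \<and> (\<forall>(Z::'y set) (q::'y \<Rightarrow>\<^sub>L 'q::banach).
               closed Z \<and> subspace Z \<and> surj (blinfun_apply q) \<and>
               {y. q y = 0} = Z \<and> (\<forall>y. norm (q y) = infdist y Z) \<longrightarrow> au_star TYPE('q))"
  proof (intro impI conjI allI)
    fix X :: "'y set" and T :: "'s::banach \<Rightarrow>\<^sub>L 'y"
    assume "au_star TYPE('y)" "closed X \<and> subspace X \<and> range (blinfun_apply T) = X \<and> (\<forall>x. norm (T x) = norm x)"
    then show "au_star TYPE('s)" using part2s by blast
  next
    fix Z :: "'y set" and q :: "'y \<Rightarrow>\<^sub>L 'q::banach"
    assume "au_star TYPE('y)" "closed Z \<and> subspace Z \<and> surj (blinfun_apply q) \<and>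
               {y. q y = 0} = Z \<and> (\<forall>y. norm (q y) = infdist y Z)"
    then show "au_star TYPE('q)" using part2q by blast
  qed
qed

end
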